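(* Let $v_1,\dots,v_m$ be vectors in the closed unit ball $B^n$ of $\mathbb{R}^n$, and assume there are positive weights $\beta_1,\dots,\beta_m$ with \[ \sum_i\beta_i=1,\qquad\sum_i\beta_iv_i=0,\qquad\sum_i\beta_i|v_i|^2=\theta\ \text{ for some }\theta\in(0,1]. \] Then the inradius of $(\operatorname{conv}\{v_1,\dots,v_m\})^\circ$ is at most $1/\theta$.
   Context: The polar of $S\subseteq\mathbb{R}^n$ is $S^\circ=\{p:\langle x,p\rangle\le1\ \forall x\in S\}$. The inradius of a convex set is the supremum of radii of Euclidean balls contained in it (within its affine hull). *)

theory Defs
  imports "HOL-Analysis.Analysis"
begin

definition polar :: "'a::real_inner set \<Rightarrow> 'a set" where
  "polar S = {p. \<forall>x\<in>S. inner x p \<le> 1}"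

definition inradius :: "'a::euclidean_space set \<Rightarrow> ereal" where
  "inradius S = Sup (ereal ` {r. r \<ge> 0 \<and> (\<exists>c \<in> affine hull S. cball c r \<inter> affine hull S \<subseteq> S)})"

end

theory Submission
  imports Defs
begin

theorem mainTheorem12:
  fixes v :: "nat \<Rightarrow> 'a::euclidean_space" and \<beta> :: "nat \<Rightarrow> real"
    and m :: nat and \<theta> :: real
  assumes v_ball: "\<And>i. i < m \<Longrightarrow> norm (v i) \<le> 1"
    and \<beta>_pos: "\<And>i. i < m \<Longrightarrow> \<beta> i > 0"
    and sum1: "(\<Sum>i<m. \<beta> i) = 1"
    and sum0: "(\<Sum>i<m. \<beta> i *\<^sub>R v i) = 0"
    and sumsq: "(\<Sum>i<m. \<beta> i * (norm (v i))\<^sup>2) = \<theta>"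
    and \<theta>_pos: "0 < \<theta>" and \<theta>_le: "\<theta> \<le> 1"
  shows "inradius (polar (convex hull (v ` {..<m}))) \<le> ereal (1 / \<theta>)"
proof -
  define P where "P = polar (convex hull (v ` {..<m}))"
  have ch: "convex hull (v ` {..<m}) \<subseteq> cball 0 1"
    by (rule hull_minimal) (auto simp: v_ball)
  have "ball 0 1 \<subseteq> P"
  proof
    fix p :: 'a assume p: "p \<in> ball 0 1"
    show "p \<in> P" unfolding P_def polar_def
    proof (intro CollectI ballI)
      fix x assume "x \<in> convex hull (v ` {..<m})"
      with ch have "norm x \<le> 1" by auto
      moreover have "norm p \<le> 1" using p by simp
      ultimately have "norm x * norm p \<le> 1" by (simp add: mult_le_one)
      thus "inner x p \<le> 1" using norm_cauchy_schwarz[of x p] by linarith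
    qed
  qed
  hence "affine hull (ball (0::'a) 1) \<subseteq> affine hull P" by (rule hull_mono)
  hence aff: "affine hull P = UNIV" by (auto simp: affine_hull_open)
  have key: "r \<le> 1 / \<theta>" if r0: "r \<ge> 0" and sub: "cball c r \<subseteq> P" for r c
  proof -
    have ineq: "inner (v i) c + r * norm (v i) \<le> 1" if i: "i < m" for i
    proof (cases "v i = 0")
      case True
      then show ?thesis by simp
    next
      case False
      define p where "p = c + (r / norm (v i)) *\<^sub>R v i"
      have "dist c p = r" using False r0 by (simp add: p_def dist_norm)
      hence "p \<in> P" using sub by auto
      moreover have "v i \<in> convex hull (v ` {..<m})" using i by (intro hull_inc) auto
      ultimately have "inner (v i) p \<le> 1" unfolding P_def polar_def by auto
      moreover have "inner (v i) p = inner (v i) c + r * norm (v i)"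
        using False by (simp add: p_def inner_add_right power2_norm_eq_inner[symmetric] power2_eq_square)
      ultimately show ?thesis by simp
    qed
    have "(\<Sum>i<m. \<beta> i * (inner (v i) c + r * norm (v i))) \<le> (\<Sum>i<m. \<beta> i)"
      by (intro sum_mono) (use ineq \<beta>_pos in \<open>simp add: less_imp_le\<close>)
    moreover have "(\<Sum>i<m. \<beta> i * inner (v i) c) = inner (\<Sum>i<m. \<beta> i *\<^sub>R v i) c"
      by (simp add: inner_sum_left)
    ultimately have A: "r * (\<Sum>i<m. \<beta> i * norm (v i)) \<le> 1"
      using sum0 sum1 by (simp add: distrib_left sum.distrib sum_distrib_left mult_ac)
    have "\<theta> \<le> (\<Sum>i<m. \<beta> i * norm (v i))"
      unfolding sumsq[symmetric]
    proof (intro sum_mono)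
      fix i assume "i \<in> {..<m}"
      hence "norm (v i) \<le> 1" "\<beta> i > 0" using v_ball \<beta>_pos by auto
      hence "(norm (v i))\<^sup>2 \<le> norm (v i)" by (simp add: power2_eq_square mult_left_le)
      thus "\<beta> i * (norm (v i))\<^sup>2 \<le> \<beta> i * norm (v i)" using \<open>\<beta> i > 0\<close> by simp
    qed
    hence "r * \<theta> \<le> 1" using A r0 by (meson mult_left_mono order_trans)
    thus ?thesis using \<theta>_pos by (simp add: field_simps)
  qed
  show ?thesis
    unfolding P_def[symmetric] inradius_def aff
    by (rule Sup_least) (use key in auto)
qed

end
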